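(* Let $\sigma:\Sigma\to\Sigma$ be a shift of finite type. Then there exist a positive integer $m$ and a finite collection $\mathcal P$ of prototiles such that the tiling system $\sigma:T\to T$, $T=T(\mathcal P)$, satisfies: (1) $T=T_0\cup T_1\cup\dots\cup T_{m-1}$, where the sets $T_i$ are closed and cyclically permuted by the shift $\sigma$ (i.e. $\sigma(T_i)=T_{i+1}$ for $0\le i<m-1$ and $\sigma(T_{m-1})=T_0$); (2) $\sigma^m:\Sigma\to\Sigma$ is topologically conjugate to $\sigma^m:T_i\to T_i$ for every $i\in\{0,\dots,m-1\}$.
   Context: A prototile is a finite nonempty subset of $\mathbb Z$ with minimum $0$. Let $\mathcal P=\{P_1,\dots,P_K\}$ be a finite collection of prototiles. A tile is a translate $t+P_k$ ($t\in\mathbb Z$). A tiling of the integers by $\mathcal P$ is an expression of $\mathbb Z$ as a disjoint union of tiles, $\mathbb Z=\bigcup_j (t_j+P_{k_j})$. To such a tiling corresponds the point $x=(x_i)\in\{1,\dots,K\}^{\mathbb Z}$ defined by $x_i=k$ iff there is $j$ with $i\in t_j+P_{k_j}$ and $k_j=k$. $T(\mathcal P)$ denotes the set of all points corresponding to tilings of $\mathbb Z$ by $\mathcal P$; it is closed and shift-invariant, where $\sigma$ is the shift $(\sigma(x))_i=x_{i+1}$. The map $\sigma:T(\mathcal P)\to T(\mathcal P)$ is called a tiling system. *)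

theory Defs
  imports "HOL-Analysis.Analysis"
begin

definition shift_top :: "(int \<Rightarrow> 'a) topology" where
  "shift_top = product_topology (\<lambda>_. discrete_topology UNIV) UNIV"

definition shift :: "(int \<Rightarrow> 'a) \<Rightarrow> (int \<Rightarrow> 'a)" where
  "shift x = (\<lambda>i. x (i + 1))"

definition occurs_at :: "'a list \<Rightarrow> (int \<Rightarrow> 'a) \<Rightarrow> int \<Rightarrow> bool" where
  "occurs_at w x i \<longleftrightarrow> (\<forall>j < length w. x (i + int j) = w ! j)"

definition forbid_shift :: "'a list set \<Rightarrow> (int \<Rightarrow> 'a) set" where
  "forbid_shift F = {x. \<forall>w\<in>F. \<forall>i. \<not> occurs_at w x i}"

definition is_SFT :: "(int \<Rightarrow> 'a::finite) set \<Rightarrow> bool" where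
  "is_SFT S \<longleftrightarrow> (\<exists>F. finite F \<and> S = forbid_shift F)"

definition prototile :: "int set \<Rightarrow> bool" where
  "prototile A \<longleftrightarrow> finite A \<and> A \<noteq> {} \<and> Min A = 0"

definition prototile_collection :: "nat \<Rightarrow> (nat \<Rightarrow> int set) \<Rightarrow> bool" where
  "prototile_collection K P \<longleftrightarrow> K \<ge> 1 \<and> (\<forall>k\<in>{1..K}. prototile (P k))"

text \<open>A tiling is a family of tiles t + P_k, encoded as a set J of pairs (t,k),
  such that every integer lies in exactly one tile of the family (disjoint union
  covering Z). The associated point labels i with the index k of its tile.\<close>
definition tiling_points :: "nat \<Rightarrow> (nat \<Rightarrow> int set) \<Rightarrow> (int \<Rightarrow> nat) set" where
  "tiling_points K P = {x. \<exists>J :: (int \<times> nat) set.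
      (\<forall>(t, k)\<in>J. k \<in> {1..K}) \<and>
      (\<forall>i. \<exists>!(t, k). (t, k) \<in> J \<and> i \<in> (+) t ` P k) \<and>
      (\<forall>i t k. (t, k) \<in> J \<and> i \<in> (+) t ` P k \<longrightarrow> x i = k)}"

end

theory Submission
  imports Defs
begin

lemma topspace_shift_top [simp]: "topspace (shift_top :: (int \<Rightarrow> 'a) topology) = UNIV"
  unfolding shift_top_def by (auto simp: PiE_def extensional_def)

definition cyl :: "(int \<Rightarrow> 'a) \<Rightarrow> int set \<Rightarrow> (int \<Rightarrow> 'a) set" where
  "cyl x0 D = {x. \<forall>d\<in>D. x d = x0 d}"

lemma cyl_open: "finite D \<Longrightarrow> openin shift_top (cyl x0 D)"
proof (induction D rule: finite_induct)
  case empty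
  then show ?case by (simp add: cyl_def) (metis openin_topspace topspace_shift_top)
next
  case (insert d D)
  have "cyl x0 (insert d D) = {x. x d = x0 d} \<inter> cyl x0 D" by (auto simp: cyl_def)
  moreover have "openin shift_top {x. x d = x0 d}"
  proof -
    have c: "continuous_map shift_top (discrete_topology UNIV) (\<lambda>x. x d)"
      unfolding shift_top_def by (rule continuous_map_product_projection) simp
    have "openin shift_top {x \<in> topspace shift_top. x d \<in> {x0 d}}"
      by (rule openin_continuous_map_preimage[OF c]) simp
    then show ?thesis by simp
  qed
  ultimately show ?case using insert by auto
qed

lemma fd_open:
  assumes "finite D" "\<And>x y. (\<forall>d\<in>D. x d = y d) \<Longrightarrow> x \<in> A \<Longrightarrow> y \<in> A"
  shows "openin shift_top A"
proof -
  have "A = (\<Union>x0\<in>A. cyl x0 D)"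
  proof
    show "A \<subseteq> (\<Union>x0\<in>A. cyl x0 D)" by (auto simp: cyl_def)
    show "(\<Union>x0\<in>A. cyl x0 D) \<subseteq> A"
    proof
      fix y assume "y \<in> (\<Union>x0\<in>A. cyl x0 D)"
      then obtain x0 where "x0 \<in> A" "\<forall>d\<in>D. x0 d = y d" by (auto simp: cyl_def)
      then show "y \<in> A" using assms(2) by blast
    qed
  qed
  moreover have "openin shift_top (\<Union>x0\<in>A. cyl x0 D)"
    by (rule openin_Union) (use cyl_open[OF assms(1)] in blast)
  ultimately show ?thesis by simp
qed

lemma fd_closed:
  assumes "finite D" "\<And>x y. (\<forall>d\<in>D. x d = y d) \<Longrightarrow> x \<in> A \<Longrightarrow> y \<in> A"
  shows "closedin shift_top A"
proof -
  have "openin shift_top (- A)"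
    proof (rule fd_open[OF assms(1)])
    fix x y assume a: "\<forall>d\<in>D. x d = y d" "x \<in> - A"
    show "y \<in> - A"
    proof
      assume "y \<in> A"
      moreover have "\<forall>d\<in>D. y d = x d" using a by simp
      ultimately show False using assms(2) a(2) by blast
    qed
  qed
  then show ?thesis by (simp add: closedin_def Compl_eq_Diff_UNIV)
qed

lemma fd_cont:
  fixes f :: "(int \<Rightarrow> 'a) \<Rightarrow> int \<Rightarrow> 'b"
  assumes "\<And>n. \<exists>D. finite D \<and> (\<forall>x y. (\<forall>d\<in>D. x d = y d) \<longrightarrow> f x n = f y n)"
  shows "continuous_map shift_top shift_top f"
proof -
  have "continuous_map shift_top (discrete_topology UNIV) (\<lambda>x. f x n)" for n
  proof -
    obtain D where D: "finite D" "\<And>x y. \<forall>d\<in>D. x d = y d \<Longrightarrow> f x n = f y n"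
      using assms by blast
    have "openin shift_top {x. f x n \<in> U}" for U
    proof (rule fd_open[OF D(1)])
      fix x y :: "int \<Rightarrow> 'a" assume "\<forall>d\<in>D. x d = y d" "x \<in> {x. f x n \<in> U}"
      then show "y \<in> {x. f x n \<in> U}" using D(2)[of x y] by simp
    qed
    then show ?thesis unfolding continuous_map_def by simp
  qed
  then show ?thesis unfolding shift_top_def[of] continuous_map_componentwise_UNIV
    by (simp add: shift_top_def)
qed

lemma compact_shift_top: "compact_space (shift_top :: (int \<Rightarrow> 'a::finite) topology)"
  unfolding shift_top_def by (simp add: compact_space_product_topology compact_space_discrete_topology)

lemma Hausdorff_shift_top: "Hausdorff_space shift_top"
  unfolding shift_top_def by (simp add: Hausdorff_space_product_topology)

lemma funpow_shift: "(shift ^^ i) x = (\<lambda>n. x (n + int i))"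
  by (induction i arbitrary: x) (auto simp: shift_def algebra_simps)

lemma image_iff_minus: "(i \<in> (+) t ` A) = (i - t \<in> (A :: int set))"
  by (auto simp: image_iff) (metis add.commute diff_add_cancel)

lemma tiling_pointsD:
  assumes "y \<in> tiling_points K P"
  obtains J where "\<And>t k. (t, k) \<in> J \<Longrightarrow> k \<in> {1..K}"
    "\<And>i. \<exists>t k. (t, k) \<in> J \<and> i - t \<in> P k"
    "\<And>i t k t' k'. (t, k) \<in> J \<Longrightarrow> (t', k') \<in> J \<Longrightarrow> i - t \<in> P k \<Longrightarrow> i - t' \<in> P k' \<Longrightarrow> t = t' \<and> k = k'"
    "\<And>i t k. (t, k) \<in> J \<Longrightarrow> i - t \<in> P k \<Longrightarrow> y i = k"
proof -
  obtain J :: "(int \<times> nat) set" where J1: "\<forall>(t, k)\<in>J. k \<in> {1..K}"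
    and J2: "\<forall>i. \<exists>!(t, k). (t, k) \<in> J \<and> i \<in> (+) t ` P k"
    and J3: "\<forall>i t k. (t, k) \<in> J \<and> i \<in> (+) t ` P k \<longrightarrow> y i = k"
    using assms unfolding tiling_points_def by blast
  show ?thesis
  proof (rule that[of J])
    show "\<And>t k. (t, k) \<in> J \<Longrightarrow> k \<in> {1..K}" using J1 by blast
    show "\<exists>t k. (t, k) \<in> J \<and> i - t \<in> P k" for i
      using J2[rule_format, of i] by (auto simp: image_iff_minus)
    show "t = t' \<and> k = k'" if "(t, k) \<in> J" "(t', k') \<in> J" "i - t \<in> P k" "i - t' \<in> P k'" for i t k t' k'
    proof -
      from J2[rule_format, of i] obtain p where p: "case p of (t, k) \<Rightarrow> (t, k) \<in> J \<and> i \<in> (+) t ` P k"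
        and pu: "\<And>q. (case q of (t, k) \<Rightarrow> (t, k) \<in> J \<and> i \<in> (+) t ` P k) \<Longrightarrow> q = p"
        by (metis (no_types, lifting) ex1E)
      have "(t, k) = p" by (rule pu) (use that in \<open>auto simp: image_iff_minus\<close>)
      moreover have "(t', k') = p" by (rule pu) (use that in \<open>auto simp: image_iff_minus\<close>)
      ultimately show ?thesis by (metis Pair_inject)
    qed
    show "y i = k" if "(t, k) \<in> J" "i - t \<in> P k" for i t k
      using J3 that by (auto simp: image_iff_minus)
  qed
qed

lemma tiling_pointsI:
  assumes "\<And>t k. (t, k) \<in> J \<Longrightarrow> k \<in> {1..K}"
    "\<And>i. \<exists>t k. (t, k) \<in> J \<and> i - t \<in> P k"
    "\<And>i t k t' k'. (t, k) \<in> J \<Longrightarrow> (t', k') \<in> J \<Longrightarrow> i - t \<in> P k \<Longrightarrow> i - t' \<in> P k' \<Longrightarrow> t = t' \<and> k = k'"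
    "\<And>i t k. (t, k) \<in> J \<Longrightarrow> i - t \<in> P k \<Longrightarrow> y i = k"
  shows "y \<in> tiling_points K P"
  unfolding tiling_points_def
proof (intro CollectI exI[of _ J] conjI allI impI)
  show "\<forall>(t, k)\<in>J. k \<in> {1..K}" using assms(1) by blast
  show "\<exists>!(t, k). (t, k) \<in> J \<and> i \<in> (+) t ` P k" for i
  proof -
    obtain t k where tk: "(t, k) \<in> J" "i - t \<in> P k" using assms(2) by blast
    show ?thesis
    proof (rule ex1I[of _ "(t, k)"])
      show "case (t, k) of (t, k) \<Rightarrow> (t, k) \<in> J \<and> i \<in> (+) t ` P k"
        using tk by (simp add: image_iff_minus)
      fix q assume "case q of (t, k) \<Rightarrow> (t, k) \<in> J \<and> i \<in> (+) t ` P k"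
      then show "q = (t, k)" using assms(3)[OF _ tk(1) _ tk(2)]
        by (cases q) (auto simp: image_iff_minus)
    qed
  qed
  show "y i = k" if "(t, k) \<in> J \<and> i \<in> (+) t ` P k" for i t k
    using assms(4) that by (auto simp: image_iff_minus)
qed

lemma blockpos:
  fixes d r MM :: int
  assumes "0 \<le> r" "r < MM" "0 \<le> d * MM + r" "d * MM + r < 2 * MM"
  shows "d = 0 \<or> d = 1"
proof -
  have "\<not> d \<le> -1"
  proof
    assume "d \<le> -1"
    then have "d * MM \<le> -1 * MM" using assms by (intro mult_right_mono) auto
    then show False using assms by simp
  qed
  moreover have "\<not> d \<ge> 2"
  proof
    assume "d \<ge> 2"
    moreover have "0 \<le> MM" using assms by simp
    ultimately have "2 * MM \<le> d * MM" by (intro mult_right_mono) auto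
    then show False using assms by linarith
  qed
  ultimately show ?thesis by linarith
qed

locale TS =
  fixes N K :: nat and a b :: "nat \<Rightarrow> nat"
  assumes a_lt: "a k < N" and b_le: "b k \<le> N"
begin

definition MM :: int where "MM = int N + 4"

definition Pt :: "nat \<Rightarrow> int set" where
  "Pt k = ({0..<MM} - {2 + int (a k)}) \<union> {MM + 2 + int (b k)}"

lemma MM_pos: "MM \<ge> 4" by (simp add: MM_def)

lemma hole_a: "2 + int (a k) < MM - 1" using a_lt[of k] by (simp add: MM_def)
lemma hole_b: "2 + int (b k) < MM - 1" using b_le[of k] by (simp add: MM_def)

lemma Pt_low: "0 \<le> z \<Longrightarrow> z < MM \<Longrightarrow> z \<in> Pt k \<longleftrightarrow> z \<noteq> 2 + int (a k)"
  unfolding Pt_def by auto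

lemma Pt_high: "MM \<le> z \<Longrightarrow> z \<in> Pt k \<longleftrightarrow> z = MM + 2 + int (b k)"
  unfolding Pt_def by auto

lemma Pt_range: "z \<in> Pt k \<Longrightarrow> 0 \<le> z \<and> z < 2 * MM"
  unfolding Pt_def using hole_b[of k] by auto

lemma Pt_0: "0 \<in> Pt k" using Pt_low[of 0 k] MM_pos by simp
lemma Pt_1: "1 \<in> Pt k" using Pt_low[of 1 k] MM_pos by simp

lemma prototile_Pt: "prototile (Pt k)"
proof -
  have f: "finite (Pt k)" unfolding Pt_def by simp
  have "Min (Pt k) = 0"
    by (rule Min_eqI[OF f]) (use Pt_range Pt_0 in auto)
  then show ?thesis using f Pt_0 unfolding prototile_def by auto
qed

definition G :: "(int \<Rightarrow> nat) \<Rightarrow> int \<Rightarrow> nat" where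
  "G \<kappa> m = (if m mod MM = 2 + int (a (\<kappa> (m div MM))) then \<kappa> (m div MM - 1) else \<kappa> (m div MM))"

definition valid :: "(int \<Rightarrow> nat) \<Rightarrow> bool" where
  "valid \<kappa> \<longleftrightarrow> (\<forall>j. \<kappa> j \<in> {1..K} \<and> b (\<kappa> j) = a (\<kappa> (j + 1)))"

lemma G_block: "G \<kappa> (j * MM) = \<kappa> j"
proof -
  have "(j * MM) mod MM = 0" "(j * MM) div MM = j" using MM_pos by auto
  then show ?thesis unfolding G_def using MM_pos by simp
qed

lemma G_shift: "G \<kappa> (m + c * MM) = G (\<lambda>j. \<kappa> (j + c)) m"
proof -
  have "(m + c * MM) mod MM = m mod MM" "(m + c * MM) div MM = m div MM + c" using MM_pos by auto
  then show ?thesis unfolding G_def by (simp add: algebra_simps)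
qed

lemma G_tiling:
  assumes v: "valid \<kappa>"
  shows "(\<lambda>n. G \<kappa> (n + c)) \<in> tiling_points K Pt"
proof -
  define J where "J = (\<lambda>j. (j * MM - c, \<kappa> j)) ` UNIV"
  have key: "(j' * MM - c, \<kappa> j') \<in> J \<and> n - (j' * MM - c) \<in> Pt (\<kappa> j') \<longleftrightarrow>
     j' = (if (n + c) mod MM = 2 + int (a (\<kappa> ((n + c) div MM))) then (n + c) div MM - 1 else (n + c) div MM)"
    for n j'
  proof -
    define j where "j = (n + c) div MM"
    define r where "r = (n + c) mod MM"
    have r: "0 \<le> r" "r < MM" using MM_pos by (auto simp: r_def)
    have m: "n + c = j * MM + r" by (simp add: j_def r_def)
    have off: "n - (j' * MM - c) = (j - j') * MM + r" using m by (simp add: algebra_simps)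
    have vj: "b (\<kappa> (j - 1)) = a (\<kappa> j)" using v unfolding valid_def by (metis diff_add_cancel)
    show ?thesis
    proof
      assume h: "(j' * MM - c, \<kappa> j') \<in> J \<and> n - (j' * MM - c) \<in> Pt (\<kappa> j')"
      then have "0 \<le> (j - j') * MM + r" "(j - j') * MM + r < 2 * MM"
        using Pt_range off by fastforce+
      then have "j - j' = 0 \<or> j - j' = 1" using blockpos r by blast
      then show "j' = (if (n + c) mod MM = 2 + int (a (\<kappa> ((n + c) div MM))) then (n + c) div MM - 1 else (n + c) div MM)"
      proof
        assume "j - j' = 0"
        then have "r \<in> Pt (\<kappa> j)" "j' = j" using h off by auto
        then show ?thesis using Pt_low[OF r] by (auto simp: j_def r_def)
      next
        assume "j - j' = 1"
        then have "MM + r \<in> Pt (\<kappa> (j - 1))" "j' = j - 1" using h off by (auto simp: algebra_simps)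
        then show ?thesis using Pt_high[of "MM + r"] r vj by (auto simp: j_def r_def)
      qed
    next
      assume h: "j' = (if (n + c) mod MM = 2 + int (a (\<kappa> ((n + c) div MM))) then (n + c) div MM - 1 else (n + c) div MM)"
      have inJ: "(j' * MM - c, \<kappa> j') \<in> J" unfolding J_def by auto
      show "(j' * MM - c, \<kappa> j') \<in> J \<and> n - (j' * MM - c) \<in> Pt (\<kappa> j')"
      proof (cases "r = 2 + int (a (\<kappa> j))")
        case True
        then have "j' = j - 1" using h by (simp add: j_def r_def)
        then show ?thesis using inJ off True vj Pt_high[of "MM + r"] r by (auto simp: algebra_simps)
      next
        case False
        then have "j' = j" using h by (simp add: j_def r_def)
        then show ?thesis using inJ off False Pt_low[OF r] by auto
      qed
    qed
  qed
  show ?thesis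
  proof (rule tiling_pointsI[of J])
    show "k \<in> {1..K}" if "(t, k) \<in> J" for t k using that v unfolding J_def valid_def by auto
    show "\<exists>t k. (t, k) \<in> J \<and> i - t \<in> Pt k" for i
      using key[of _ i] by blast
    show "t = t' \<and> k = k'" if hh: "(t, k) \<in> J" "(t', k') \<in> J" "i - t \<in> Pt k" "i - t' \<in> Pt k'" for i t k t' k'
    proof -
      obtain j1 where 1: "t = j1 * MM - c" "k = \<kappa> j1" using hh(1) unfolding J_def by auto
      obtain j2 where 2: "t' = j2 * MM - c" "k' = \<kappa> j2" using hh(2) unfolding J_def by auto
      have "j1 = j2" using key[of j1 i] key[of j2 i] hh 1 2 by simp
      then show ?thesis using 1 2 by simp
    qed
    show "G \<kappa> (i + c) = k" if hh: "(t, k) \<in> J" "i - t \<in> Pt k" for i t k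
    proof -
      obtain j1 where 1: "t = j1 * MM - c" "k = \<kappa> j1" using hh(1) unfolding J_def by auto
      have "j1 = (if (i + c) mod MM = 2 + int (a (\<kappa> ((i + c) div MM))) then (i + c) div MM - 1 else (i + c) div MM)"
        using key[of j1 i] hh 1 by simp
      then show ?thesis using 1 unfolding G_def by simp
    qed
  qed
qed

end

context TS begin

lemma tiling_G_rev:
  assumes "y \<in> tiling_points K Pt"
  shows "\<exists>\<kappa> i. valid \<kappa> \<and> i < nat MM \<and> y = (\<lambda>n. G \<kappa> (n + int i))"
proof -
  obtain J where kin: "\<And>t k. (t, k) \<in> J \<Longrightarrow> k \<in> {1..K}"
    and cov: "\<And>i. \<exists>t k. (t, k) \<in> J \<and> i - t \<in> Pt k"
    and uniq: "\<And>i t k t' k'. (t, k) \<in> J \<Longrightarrow> (t', k') \<in> J \<Longrightarrow> i - t \<in> Pt k \<Longrightarrow> i - t' \<in> Pt k' \<Longrightarrow> t = t' \<and> k = k'"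
    and lab: "\<And>i t k. (t, k) \<in> J \<Longrightarrow> i - t \<in> Pt k \<Longrightarrow> y i = k"
    by (rule tiling_pointsD[OF assms], blast)
  have succ: "\<exists>k'. (t + MM, k') \<in> J" if tk: "(t, k) \<in> J" for t k
  proof -
    obtain s k'' where s: "(s, k'') \<in> J" "t + MM - s \<in> Pt k''" using cov[of "t + MM"] by blast
    have os: "0 \<le> t + MM - s" "t + MM - s < 2 * MM" using Pt_range[OF s(2)] by auto
    have "s = t + MM \<or> s = t \<or> (t < s \<and> s < t + MM) \<or> s < t" using os by linarith
    then consider "s = t + MM" | "s = t" | "t < s \<and> s < t + MM" | "s < t" by blast
    then show ?thesis
    proof cases
      case 1 then show ?thesis using s by blast
    next
      case 2 then show ?thesis using s(2) Pt_high[of MM k''] by simp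
    next
      case 3
      have s0: "s - s \<in> Pt k''" using Pt_0 by simp
      have s1: "s + 1 - s \<in> Pt k''" using Pt_1 by simp
      show ?thesis
      proof (cases "s - t = 2 + int (a k)")
        case True
        have "s + 1 - t \<in> Pt k" using True hole_a[of k] Pt_low[of "s + 1 - t" k] by simp
        then show ?thesis using uniq[OF tk s(1) _ s1] 3 by simp
      next
        case False
        have "s - t \<in> Pt k" using False 3 Pt_low[of "s - t" k] by simp
        then show ?thesis using uniq[OF tk s(1) _ s0] 3 by simp
      qed
    next
      case 4
      have e: "t - s = 2 + int (b k'')" using s(2) Pt_high[of "t + MM - s" k''] 4 by simp
      have t0: "t - t \<in> Pt k" using Pt_0 by simp
      have t1: "t + 1 - t \<in> Pt k" using Pt_1 by simp
      show ?thesis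
      proof (cases "t - s = 2 + int (a k'')")
        case True
        have "t + 1 - s \<in> Pt k''" using True e hole_b[of k''] Pt_low[of "t + 1 - s" k''] by simp
        then show ?thesis using uniq[OF tk s(1) t1] 4 by simp
      next
        case False
        have "t - s \<in> Pt k''" using False e hole_b[of k''] Pt_low[of "t - s" k''] by simp
        then show ?thesis using uniq[OF tk s(1) t0] 4 by simp
      qed
    qed
  qed
  have compat: "b k = a k'" if tk: "(t, k) \<in> J" "(t + MM, k') \<in> J" for t k k'
  proof (rule ccontr)
    assume ne: "b k \<noteq> a k'"
    define i where "i = t + MM + 2 + int (b k)"
    have 1: "i - t \<in> Pt k" using Pt_high[of "i - t" k] by (simp add: i_def)
    have 2: "i - (t + MM) \<in> Pt k'" using Pt_low[of "i - (t + MM)" k'] ne hole_b[of k] by (simp add: i_def)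
    show False using uniq[OF tk 1 2] MM_pos by simp
  qed
  have chain: "\<exists>k'. (t + int j * MM, k') \<in> J" if tk: "(t, k) \<in> J" for t k j
  proof (induction j)
    case 0 then show ?case using tk by auto
  next
    case (Suc j)
    then obtain k' where "(t + int j * MM, k') \<in> J" by blast
    from succ[OF this] show ?case by (simp add: algebra_simps)
  qed
  have covchain: "\<exists>u \<kappa>. (u, \<kappa>) \<in> J \<and> u mod MM = t mod MM \<and> n - u \<in> Pt \<kappa>"
    if tk: "(t, k) \<in> J" and n: "t + MM \<le> n" for t k n
  proof -
    define j where "j = (n - t) div MM"
    define r where "r = (n - t) mod MM"
    have r: "0 \<le> r" "r < MM" using MM_pos by (auto simp: r_def)
    have nj: "n - t = j * MM + r" by (simp add: j_def r_def)
    have j1: "j \<ge> 1"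
    proof (rule ccontr)
      assume "\<not> j \<ge> 1"
      then have "j * MM \<le> 0 * MM" using MM_pos by (intro mult_right_mono) auto
      then show False using nj n r by simp
    qed
    obtain \<kappa> where \<kappa>: "(t + int (nat j) * MM, \<kappa>) \<in> J" using chain[OF tk] by blast
    obtain \<kappa>' where \<kappa>': "(t + int (nat (j - 1)) * MM, \<kappa>') \<in> J" using chain[OF tk] by blast
    have u1: "int (nat j) = j" using j1 by simp
    have u2: "int (nat (j - 1)) = j - 1" using j1 by simp
    have \<kappa>a: "(t + j * MM, \<kappa>) \<in> J" using \<kappa> unfolding u1 .
    have \<kappa>b: "(t + (j - 1) * MM, \<kappa>') \<in> J" using \<kappa>' unfolding u2 .
    have eqm: "t + (j - 1) * MM + MM = t + j * MM" by (simp add: algebra_simps)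
    have c: "b \<kappa>' = a \<kappa>" using compat[OF \<kappa>b, of \<kappa>] \<kappa>a unfolding eqm by blast
    show ?thesis
    proof (cases "r = 2 + int (a \<kappa>)")
      case False
      then have "n - (t + j * MM) \<in> Pt \<kappa>" using Pt_low[OF r, of \<kappa>] nj by (simp add: algebra_simps)
      then show ?thesis using \<kappa>a by (intro exI[of _ "t + j * MM"] exI[of _ \<kappa>]) simp
    next
      case True
      then have "n - (t + (j - 1) * MM) \<in> Pt \<kappa>'" using Pt_high[of "n - (t + (j - 1) * MM)" \<kappa>'] nj c
        by (simp add: algebra_simps)
      then show ?thesis using \<kappa>b by (intro exI[of _ "t + (j - 1) * MM"] exI[of _ \<kappa>']) simp
    qed
  qed
  have cong: "s mod MM = t mod MM" if hh: "(t, k) \<in> J" "(s, k') \<in> J" for t k s k'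
  proof -
    define n where "n = max s t + MM"
    obtain u \<kappa> where u: "(u, \<kappa>) \<in> J" "u mod MM = t mod MM" "n - u \<in> Pt \<kappa>"
      using covchain[OF hh(1), of n] by (auto simp: n_def)
    obtain u' \<kappa>' where u': "(u', \<kappa>') \<in> J" "u' mod MM = s mod MM" "n - u' \<in> Pt \<kappa>'"
      using covchain[OF hh(2), of n] by (auto simp: n_def)
    show ?thesis using uniq[OF u(1) u'(1) u(3) u'(3)] u u' by simp
  qed
  have allstarts: "\<exists>k'. (t + j * MM, k') \<in> J" if tk: "(t, k) \<in> J" for t k j
  proof -
    define n where "n = t + j * MM"
    obtain s k'' where s: "(s, k'') \<in> J" "n - s \<in> Pt k''" using cov[of n] by blast
    have "s mod MM = t mod MM" using cong[OF tk s(1)] .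
    then have "n mod MM = s mod MM" by (simp add: n_def)
    then have d: "MM dvd n - s" by (simp add: mod_eq_dvd_iff)
    then have ns: "n - s = ((n - s) div MM) * MM" by simp
    have q: "(n - s) div MM \<ge> 0" using Pt_range[OF s(2)] MM_pos by (simp add: div_int_pos_iff)
    obtain k' where k': "(s + int (nat ((n - s) div MM)) * MM, k') \<in> J" using chain[OF s(1)] by blast
    have "s + int (nat ((n - s) div MM)) * MM = n" using q ns by simp
    then have "(n, k') \<in> J" using k' by simp
    then show ?thesis by (auto simp: n_def)
  qed
  obtain t0 k0 where t0: "(t0, k0) \<in> J" using cov[of 0] by blast
  define i where "i = nat ((- t0) mod MM)"
  have ii: "int i = (- t0) mod MM" using MM_pos by (simp add: i_def)
  have ilt: "i < nat MM" using MM_pos by (simp add: i_def)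
  define \<kappa> where "\<kappa> j = y (j * MM - int i)" for j
  have start: "(j * MM - int i, \<kappa> j) \<in> J" for j
  proof -
    have e: "j * MM - int i = t0 + (j + (- t0) div MM) * MM"
    proof -
      have "(- t0) div MM * MM + int i = - t0" using ii div_mult_mod_eq[of "- t0" MM] by simp
      then have "j * MM - int i = t0 + (j * MM + ((- t0) div MM) * MM)" by linarith
      then show ?thesis by (simp add: distrib_right)
    qed
    obtain k' where k': "(j * MM - int i, k') \<in> J" using allstarts[OF t0, of "j + (- t0) div MM"] e by auto
    have "y (j * MM - int i) = k'" using lab[OF k'] Pt_0 by simp
    then show ?thesis using k' by (simp add: \<kappa>_def)
  qed
  have v: "valid \<kappa>"
    unfolding valid_def
  proof
    fix j
    have "b (\<kappa> j) = a (\<kappa> (j + 1))"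
      using compat[OF start[of j]] start[of "j + 1"] by (simp add: algebra_simps)
    then show "\<kappa> j \<in> {1..K} \<and> b (\<kappa> j) = a (\<kappa> (j + 1))" using kin[OF start[of j]] by simp
  qed
  have "y n = G \<kappa> (n + int i)" for n
  proof -
    define j where "j = (n + int i) div MM"
    define r where "r = (n + int i) mod MM"
    have r: "0 \<le> r" "r < MM" using MM_pos by (auto simp: r_def)
    have nj: "n + int i = j * MM + r" by (simp add: j_def r_def)
    show ?thesis
    proof (cases "r = 2 + int (a (\<kappa> j))")
      case False
      have "n - (j * MM - int i) \<in> Pt (\<kappa> j)" using Pt_low[OF r, of "\<kappa> j"] False nj
        by (simp add: algebra_simps)
      then have "y n = \<kappa> j" using lab[OF start[of j]] by simp
      then show ?thesis unfolding G_def using False by (simp add: j_def r_def)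
    next
      case True
      have c: "b (\<kappa> (j - 1)) = a (\<kappa> j)" using v unfolding valid_def by (metis diff_add_cancel)
      have "n - ((j - 1) * MM - int i) \<in> Pt (\<kappa> (j - 1))"
        using Pt_high[of "n - ((j - 1) * MM - int i)" "\<kappa> (j - 1)"] True nj c r
        by (simp add: algebra_simps)
      then have "y n = \<kappa> (j - 1)" using lab[OF start[of "j - 1"]] by simp
      then show ?thesis unfolding G_def using True by (simp add: j_def r_def)
    qed
  qed
  then show ?thesis using v ilt by blast
qed

end

lemma finite_len_lists: "finite {xs :: 'a::finite list. length xs = n}"
  using finite_lists_length_eq[of "UNIV :: 'a set" n] by simp

lemma forbid_closed: "closedin shift_top (forbid_shift F)"
proof -
  define A where "A = (\<lambda>(w, i). {x. \<not> occurs_at w x i}) ` (F \<times> (UNIV :: int set))"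
  have e: "forbid_shift F = \<Inter> (insert UNIV A)" by (auto simp: forbid_shift_def A_def)
  have "closedin shift_top S" if hS: "S \<in> insert UNIV A" for S
  proof (cases "S = UNIV")
    case True then show ?thesis using closedin_topspace[of shift_top] by simp
  next
    case False
    then obtain w i where S: "S = {x. \<not> occurs_at w x i}" using hS by (auto simp: A_def)
    show ?thesis unfolding S
    proof (rule fd_closed[of "{i..<i + int (length w)}"])
      fix x y :: "int \<Rightarrow> 'a" assume "\<forall>d\<in>{i..<i + int (length w)}. x d = y d" "x \<in> {x. \<not> occurs_at w x i}"
      then show "y \<in> {x. \<not> occurs_at w x i}" by (auto simp: occurs_at_def)
    qed simp
  qed
  then show ?thesis unfolding e by (intro closedin_Inter) auto
qed

lemma occurs_shift: "occurs_at w ((shift ^^ n) x) i = occurs_at w x (i + int n)"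
  by (simp add: occurs_at_def funpow_shift algebra_simps)

lemma forbid_shift_inv: "(shift ^^ n) ` forbid_shift F = forbid_shift F"
proof
  show "(shift ^^ n) ` forbid_shift F \<subseteq> forbid_shift F"
    by (auto simp: forbid_shift_def occurs_shift)
  show "forbid_shift F \<subseteq> (shift ^^ n) ` forbid_shift F"
  proof
    fix x assume x: "x \<in> forbid_shift F"
    define z where "z = (\<lambda>m. x (m - int n))"
    have "(shift ^^ n) z = x" by (simp add: funpow_shift z_def)
    moreover have "z \<in> forbid_shift F"
    proof -
      have "occurs_at w z i = occurs_at w x (i - int n)" for w i
        by (simp add: occurs_at_def z_def algebra_simps)
      then show ?thesis using x by (simp add: forbid_shift_def)
    qed
    ultimately show "x \<in> (shift ^^ n) ` forbid_shift F" by blast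
  qed
qed

theorem mainTheorem1:
  fixes \<Sigma> :: "(int \<Rightarrow> 'a::finite) set"
  assumes "is_SFT \<Sigma>"
  shows "\<exists>(m::nat) (K::nat) (P::nat \<Rightarrow> int set) (Ts::nat \<Rightarrow> (int \<Rightarrow> nat) set).
           m > 0 \<and> prototile_collection K P \<and>
           tiling_points K P = (\<Union>i<m. Ts i) \<and>
           (\<forall>i<m. closedin shift_top (Ts i)) \<and>
           (\<forall>i<m. shift ` Ts i = Ts (Suc i mod m)) \<and>
           (\<forall>i<m. \<exists>h. homeomorphic_map (subtopology shift_top \<Sigma>)
                                          (subtopology shift_top (Ts i)) h \<and>
                      (\<forall>x\<in>\<Sigma>. h ((shift ^^ m) x) = (shift ^^ m) (h x)))"
proof -
  obtain F where finF: "finite F" and SF: "\<Sigma> = forbid_shift F"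
    using assms unfolding is_SFT_def by blast
  define L where "L = Max (insert 0 (length ` F))"
  have lenF: "length f \<le> L" if "f \<in> F" for f
    unfolding L_def using finF that by (intro Max_ge) auto
  define Ifc where "Ifc = {u :: 'a list. length u = L}"
  have finIfc: "finite Ifc" unfolding Ifc_def by (rule finite_len_lists)
  define N where "N = card Ifc"
  have "replicate L undefined \<in> Ifc" by (simp add: Ifc_def)
  then have N1: "N \<ge> 1" using finIfc unfolding N_def
    by (metis One_nat_def Suc_leI card_gt_0_iff empty_iff)
  obtain \<iota> where \<iota>: "bij_betw \<iota> Ifc {0..<N}" using ex_bij_betw_finite_nat[OF finIfc] N_def by blast
  define Mn where "Mn = N + L + 4"
  define Wd where "Wd = {w :: 'a list. length w = Mn + L}"
  have finWd: "finite Wd" unfolding Wd_def by (rule finite_len_lists)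
  define K where "K = card Wd"
  have "replicate (Mn + L) undefined \<in> Wd" by (simp add: Wd_def)
  then have K1: "K \<ge> 1" using finWd unfolding K_def
    by (metis One_nat_def Suc_leI card_gt_0_iff empty_iff)
  obtain e where e: "bij_betw e {1..K} Wd" using ex_bij_betw_nat_finite_1[OF finWd] K_def by blast
  define W where "W = {w \<in> Wd. \<forall>r<Mn. \<forall>f\<in>F. \<exists>j<length f. w ! (r + j) \<noteq> f ! j}"
  define a where "a k = (if k \<in> {1..K} then \<iota> (take L (e k)) else 0)" for k
  define b where "b k = (if k \<in> {1..K} \<and> e k \<in> W then \<iota> (drop Mn (e k)) else N)" for k
  have eWd: "e k \<in> Wd" if "k \<in> {1..K}" for k using e that by (auto simp: bij_betw_def)
  have \<iota>lt: "\<iota> u < N" if "u \<in> Ifc" for u using \<iota> that by (auto simp: bij_betw_def)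
  have a_ltN: "a k < N" for k
    using eWd[of k] \<iota>lt[of "take L (e k)"] N1 by (auto simp: a_def Wd_def Ifc_def)
  define N' where "N' = N + L"
  interpret TS N' K a b
  proof
    show "a k < N'" for k using a_ltN[of k] by (simp add: N'_def)
    show "b k \<le> N'" for k
      using eWd[of k] \<iota>lt[of "drop Mn (e k)"] by (auto simp: b_def Wd_def Ifc_def less_imp_le N'_def)
  qed
  have MMN: "MM = int N' + 4" by (simp only: MM_def)
  have MMe: "MM = int Mn" unfolding MMN by (simp add: Mn_def N'_def)
  define word :: "(int \<Rightarrow> 'a) \<Rightarrow> int \<Rightarrow> 'a list" where
    "word x i = map (\<lambda>r. x (i + int r)) [0..<Mn + L]" for x i
  have word_len: "length (word x i) = Mn + L" for x i by (simp add: word_def)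
  have word_nth: "word x i ! r = x (i + int r)" if "r < Mn + L" for x i r
    using that by (simp add: word_def)
  have word_Wd: "word x i \<in> Wd" for x i by (simp add: Wd_def word_len)
  define lab where "lab = inv_into {1..K} e"
  have lab_e: "lab (e k) = k" if "k \<in> {1..K}" for k
    using bij_betw_inv_into_left[OF e that] by (simp add: lab_def)
  have e_lab: "e (lab w) = w" if "w \<in> Wd" for w
    using bij_betw_inv_into_right[OF e that] by (simp add: lab_def)
  have lab_in: "lab w \<in> {1..K}" if "w \<in> Wd" for w
    using e that unfolding lab_def bij_betw_def by (metis inv_into_into)
  have SW1: "word x (j * MM) \<in> W" if x: "x \<in> \<Sigma>" for x j
  proof -
    have "\<exists>jj<length f. word x (j * MM) ! (r + jj) \<noteq> f ! jj" if r: "r < Mn" and f: "f \<in> F" for r f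
    proof -
      have "\<not> occurs_at f x (j * MM + int r)" using x f by (auto simp: SF forbid_shift_def)
      then obtain jj where jj: "jj < length f" "x (j * MM + int r + int jj) \<noteq> f ! jj"
        by (auto simp: occurs_at_def)
      have "r + jj < Mn + L" using jj(1) lenF[OF f] r by linarith
      then have "word x (j * MM) ! (r + jj) = x (j * MM + int r + int jj)"
        by (simp add: word_nth algebra_simps)
      then show ?thesis using jj by auto
    qed
    then show ?thesis by (auto simp: W_def word_Wd)
  qed
  have SW2: "x \<in> \<Sigma>" if w: "\<And>j. word x (j * MM) \<in> W" for x
  proof -
    have "\<not> occurs_at f x i" if f: "f \<in> F" for f i
    proof
      assume occ: "occurs_at f x i"
      define j where "j = i div MM"
      define r where "r = nat (i mod MM)"
      have m: "0 \<le> i mod MM" "i mod MM < MM" using MM_pos by auto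
      then have ir: "int r = i mod MM" by (simp add: r_def)
      have r: "r < Mn" "i = j * MM + int r"
        using m(2) MMe ir by (simp_all add: j_def)
      obtain jj where jj: "jj < length f" "word x (j * MM) ! (r + jj) \<noteq> f ! jj"
        using w[of j] r(1) f by (auto simp: W_def)
      have "r + jj < Mn + L" using jj(1) lenF[OF f] r by linarith
      then have "word x (j * MM) ! (r + jj) = x (i + int jj)"
        by (simp add: word_nth r(2) algebra_simps)
      then show False using occ jj by (auto simp: occurs_at_def)
    qed
    then show ?thesis by (auto simp: SF forbid_shift_def)
  qed
  define \<kappa>x where "\<kappa>x x j = lab (word x (j * MM))" for x j
  define h0 where "h0 x = G (\<kappa>x x)" for x
  define hh where "hh i x = (shift ^^ i) (h0 x)" for i x
  define Ts where "Ts i = hh i ` \<Sigma>" for i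
  have drop_take: "drop Mn (word x (j * MM)) = take L (word x ((j + 1) * MM))" for x j
  proof (rule nth_equalityI)
    show "length (drop Mn (word x (j * MM))) = length (take L (word x ((j + 1) * MM)))"
      by (simp add: word_len)
    fix r assume "r < length (drop Mn (word x (j * MM)))"
    then have r: "r < L" by (simp add: word_len)
    have "drop Mn (word x (j * MM)) ! r = x (j * MM + int (Mn + r))"
      using r by (simp add: word_len word_nth)
    moreover have "take L (word x ((j + 1) * MM)) ! r = x ((j + 1) * MM + int r)"
      using r by (simp add: word_nth)
    ultimately show "drop Mn (word x (j * MM)) ! r = take L (word x ((j + 1) * MM)) ! r"
      by (simp add: MMe algebra_simps)
  qed
  have valid_x: "valid (\<kappa>x x)" if x: "x \<in> \<Sigma>" for x
    unfolding valid_def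
  proof
    fix j
    have w1: "word x (j * MM) \<in> W" "word x ((j + 1) * MM) \<in> W" using SW1[OF x] by auto
    have k1: "\<kappa>x x j \<in> {1..K}" "\<kappa>x x (j + 1) \<in> {1..K}" using lab_in word_Wd by (auto simp: \<kappa>x_def)
    have "b (\<kappa>x x j) = \<iota> (drop Mn (word x (j * MM)))"
      using k1 w1 by (simp add: b_def \<kappa>x_def e_lab word_Wd)
    moreover have "a (\<kappa>x x (j + 1)) = \<iota> (take L (word x ((j + 1) * MM)))"
      using k1 by (simp add: a_def \<kappa>x_def e_lab word_Wd)
    ultimately show "\<kappa>x x j \<in> {1..K} \<and> b (\<kappa>x x j) = a (\<kappa>x x (j + 1))"
      using k1 drop_take by simp
  qed
  have word_det: "x = y" if "\<And>j. word x (j * MM) = word y (j * MM)" for x y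
  proof
    fix n
    define j where "j = n div MM"
    define r where "r = nat (n mod MM)"
    have m: "0 \<le> n mod MM" "n mod MM < MM" using MM_pos by auto
    then have ir: "int r = n mod MM" by (simp add: r_def)
    have r: "r < Mn + L" "n = j * MM + int r"
      using m(2) MMe ir by (simp_all add: j_def)
    have "word x (j * MM) ! r = word y (j * MM) ! r" using that by simp
    then show "x n = y n" using r by (simp add: word_nth)
  qed
  have h0_inj: "x = y" if "h0 x = h0 y" for x y
  proof (rule word_det)
    fix j
    have "\<kappa>x x j = \<kappa>x y j" using that G_block[of "\<kappa>x x" j] G_block[of "\<kappa>x y" j]
      by (simp add: h0_def)
    then have "e (\<kappa>x x j) = e (\<kappa>x y j)" by simp
    then show "word x (j * MM) = word y (j * MM)" by (simp add: \<kappa>x_def e_lab word_Wd)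
  qed
  have hh_inj: "inj_on (hh i) \<Sigma>" for i
  proof (rule inj_onI)
    fix x y assume "hh i x = hh i y"
    then have "h0 x (n - int i + int i) = h0 y (n - int i + int i)" for n
      unfolding hh_def funpow_shift by metis
    then have "h0 x = h0 y" by auto
    then show "x = y" by (rule h0_inj)
  qed
  have word_agree: "word x i = word y i" if "\<And>r. r < Mn + L \<Longrightarrow> x (i + int r) = y (i + int r)" for x y i
    using that by (simp add: word_def)
  have hh_cont: "continuous_map shift_top shift_top (hh i)" for i
  proof (rule fd_cont)
    fix n
    define jj where "jj = (n + int i) div MM"
    define D where "D = {(jj - 1) * MM ..< jj * MM + int (Mn + L)}"
    have "hh i x n = hh i y n" if agree: "\<forall>d\<in>D. x d = y d" for x y
    proof -
      have "word x (jj * MM) = word y (jj * MM)"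
      proof (rule word_agree)
        fix r assume "r < Mn + L"
        then have "jj * MM + int r \<in> D" using MM_pos by (auto simp: D_def algebra_simps)
        then show "x (jj * MM + int r) = y (jj * MM + int r)" using agree by blast
      qed
      moreover have "word x ((jj - 1) * MM) = word y ((jj - 1) * MM)"
      proof (rule word_agree)
        fix r assume "r < Mn + L"
        then have "(jj - 1) * MM + int r \<in> D" using MM_pos by (auto simp: D_def algebra_simps)
        then show "x ((jj - 1) * MM + int r) = y ((jj - 1) * MM + int r)" using agree by blast
      qed
      ultimately show ?thesis
        by (simp add: hh_def funpow_shift h0_def G_def \<kappa>x_def jj_def)
    qed
    then show "\<exists>D. finite D \<and> (\<forall>x y. (\<forall>d\<in>D. x d = y d) \<longrightarrow> hh i x n = hh i y n)"
      by (intro exI[of _ D]) (auto simp: D_def)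
  qed
  have word_shift: "word ((shift ^^ Mn) x) (j * MM) = word x ((j + 1) * MM)" for x j
    by (simp add: word_def funpow_shift MMe algebra_simps)
  have h0_comm: "h0 ((shift ^^ Mn) x) = (shift ^^ Mn) (h0 x)" for x
  proof -
    have "\<kappa>x ((shift ^^ Mn) x) = (\<lambda>j. \<kappa>x x (j + 1))"
      by (rule ext) (simp add: \<kappa>x_def word_shift)
    then have "h0 ((shift ^^ Mn) x) = G (\<lambda>j. \<kappa>x x (j + 1))" by (simp add: h0_def)
    moreover have "(shift ^^ Mn) (h0 x) = (\<lambda>n. G (\<kappa>x x) (n + 1 * MM))"
      by (simp add: funpow_shift MMe h0_def)
    ultimately show ?thesis by (simp only: G_shift)
  qed
  have Sinv: "(shift ^^ Mn) ` \<Sigma> = \<Sigma>" unfolding SF by (rule forbid_shift_inv)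
  have tin: "hh i x \<in> tiling_points K Pt" if "x \<in> \<Sigma>" for i x
  proof -
    have "hh i x = (\<lambda>n. G (\<kappa>x x) (n + int i))" by (simp add: hh_def funpow_shift h0_def)
    then show ?thesis using G_tiling[OF valid_x[OF that]] by simp
  qed
  have surj: "\<exists>i<Mn. \<exists>x\<in>\<Sigma>. y = hh i x" if y: "y \<in> tiling_points K Pt" for y
  proof -
    obtain \<kappa> i where v: "valid \<kappa>" and ilt: "i < nat MM" and ye: "y = (\<lambda>n. G \<kappa> (n + int i))"
      using tiling_G_rev[OF y] by blast
    define w where "w j = e (\<kappa> j)" for j
    have kin: "\<kappa> j \<in> {1..K}" for j using v by (simp add: valid_def)
    have comp: "b (\<kappa> j) = a (\<kappa> (j + 1))" for j using v by (simp add: valid_def)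
    have wWd: "w j \<in> Wd" for j using eWd[OF kin] by (simp add: w_def)
    have wW: "w j \<in> W" for j
    proof (rule ccontr)
      assume "w j \<notin> W"
      then have "b (\<kappa> j) = N" by (simp add: b_def w_def)
      moreover have "a (\<kappa> (j + 1)) < N" by (rule a_ltN)
      ultimately show False using comp[of j] by simp
    qed
    have wdt: "drop Mn (w j) = take L (w (j + 1))" for j
    proof -
      have "\<iota> (drop Mn (w j)) = \<iota> (take L (w (j + 1)))"
        using comp[of j] kin[of j] kin[of "j + 1"] wW[of j] by (simp add: a_def b_def w_def)
      moreover have "drop Mn (w j) \<in> Ifc" "take L (w (j + 1)) \<in> Ifc"
        using wWd[of j] wWd[of "j + 1"] by (auto simp: Wd_def Ifc_def)
      ultimately show ?thesis using \<iota> by (auto simp: bij_betw_def inj_on_def)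
    qed
    define x where "x n = w (n div MM) ! nat (n mod MM)" for n
    have xw: "word x (j * MM) = w j" for j
    proof (rule nth_equalityI)
      show "length (word x (j * MM)) = length (w j)" using wWd[of j] by (simp add: word_len Wd_def)
      fix r assume "r < length (word x (j * MM))"
      then have r: "r < Mn + L" by (simp add: word_len)
      show "word x (j * MM) ! r = w j ! r"
      proof (cases "r < Mn")
        case True
        have "(j * MM + int r) div MM = j" "(j * MM + int r) mod MM = int r"
          using True MMe MM_pos by auto
        then show ?thesis using r by (simp add: word_nth x_def)
      next
        case False
        define r' where "r' = r - Mn"
        have r': "r' < L" "r = Mn + r'" "r' < Mn" using False r by (auto simp: r'_def Mn_def)
        have e1: "j * MM + int r = (j + 1) * MM + int r'" using r' MMe by (simp add: algebra_simps)
        have "((j + 1) * MM + int r') div MM = j + 1" "((j + 1) * MM + int r') mod MM = int r'"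
          using r' MMe MM_pos by auto
        then have "x (j * MM + int r) = w (j + 1) ! r'" unfolding e1 by (simp add: x_def)
        also have "\<dots> = take L (w (j + 1)) ! r'" using r' by simp
        also have "\<dots> = drop Mn (w j) ! r'" using wdt[of j] by simp
        also have "\<dots> = w j ! r" using wWd[of j] r' by (simp add: Wd_def)
        finally show ?thesis using r by (simp add: word_nth)
      qed
    qed
    have xS: "x \<in> \<Sigma>" by (rule SW2) (simp add: xw wW)
    have "\<kappa>x x = \<kappa>" by (rule ext) (simp add: \<kappa>x_def xw w_def lab_e[OF kin])
    then have "y = hh i x" by (simp add: ye hh_def funpow_shift h0_def)
    moreover have "i < Mn" using ilt MMe by simp
    ultimately show ?thesis using xS by blast
  qed
  have Sclosed: "closedin shift_top \<Sigma>" unfolding SF by (rule forbid_closed)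
  have Scomp: "compactin shift_top \<Sigma>" by (rule closedin_compact_space[OF compact_shift_top Sclosed])
  show ?thesis
  proof (rule exI[of _ Mn], rule exI[of _ K], rule exI[of _ Pt], rule exI[of _ Ts], intro conjI allI impI)
    show "0 < Mn" by (simp add: Mn_def)
    show "prototile_collection K Pt" using K1 prototile_Pt by (simp add: prototile_collection_def)
    show "tiling_points K Pt = (\<Union>i<Mn. Ts i)"
    proof
      show "tiling_points K Pt \<subseteq> (\<Union>i<Mn. Ts i)"
      proof
        fix y assume "y \<in> tiling_points K Pt"
        then obtain i x where "i < Mn" "x \<in> \<Sigma>" "y = hh i x" using surj by blast
        then show "y \<in> (\<Union>i<Mn. Ts i)" by (auto simp: Ts_def)
      qed
      show "(\<Union>i<Mn. Ts i) \<subseteq> tiling_points K Pt" using tin by (auto simp: Ts_def)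
    qed
    fix i assume i: "i < Mn"
    show "closedin shift_top (Ts i)" unfolding Ts_def
      by (rule compactin_imp_closedin[OF Hausdorff_shift_top image_compactin[OF Scomp hh_cont]])
    have sh: "shift ` Ts i = hh (Suc i) ` \<Sigma>" by (auto simp: Ts_def hh_def image_image)
    show "shift ` Ts i = Ts (Suc i mod Mn)"
    proof (cases "Suc i < Mn")
      case True then show ?thesis using sh by (simp add: Ts_def)
    next
      case False
      then have si: "Suc i = Mn" using i by simp
      have "hh Mn ` \<Sigma> = h0 ` ((shift ^^ Mn) ` \<Sigma>)" by (auto simp: hh_def h0_comm image_image)
      also have "\<dots> = hh 0 ` \<Sigma>" using Sinv by (simp add: hh_def)
      finally show ?thesis using sh si by (simp add: Ts_def)
    qed
    show "\<exists>h. homeomorphic_map (subtopology shift_top \<Sigma>) (subtopology shift_top (Ts i)) h \<and>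
            (\<forall>x\<in>\<Sigma>. h ((shift ^^ Mn) x) = (shift ^^ Mn) (h x))"
    proof (intro exI[of _ "hh i"] conjI ballI)
      show "homeomorphic_map (subtopology shift_top \<Sigma>) (subtopology shift_top (Ts i)) (hh i)"
      proof (rule continuous_imp_homeomorphic_map)
        show "continuous_map (subtopology shift_top \<Sigma>) (subtopology shift_top (Ts i)) (hh i)"
          unfolding continuous_map_in_subtopology
          using continuous_map_from_subtopology[OF hh_cont] by (auto simp: Ts_def)
        show "compact_space (subtopology shift_top \<Sigma>)" by (rule compact_space_subtopology[OF Scomp])
        show "Hausdorff_space (subtopology shift_top (Ts i))"
          by (rule Hausdorff_space_subtopology[OF Hausdorff_shift_top])
        show "hh i ` topspace (subtopology shift_top \<Sigma>) = topspace (subtopology shift_top (Ts i))"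
          by (simp add: Ts_def)
        show "inj_on (hh i) (topspace (subtopology shift_top \<Sigma>))" using hh_inj by simp
      qed
      fix x assume "x \<in> \<Sigma>"
      have "hh i ((shift ^^ Mn) x) = (shift ^^ i) ((shift ^^ Mn) (h0 x))" by (simp only: hh_def h0_comm)
      also have "\<dots> = (shift ^^ Mn) ((shift ^^ i) (h0 x))" by (simp add: funpow_shift algebra_simps)
      finally show "hh i ((shift ^^ Mn) x) = (shift ^^ Mn) (hh i x)" by (simp only: hh_def)
    qed
  qed
qed

end
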